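(* Fix an integer $k\geq1$ and $V=\{0,\ldots,k\}$. Let $\varphi$ be a Boolean function on $V$ and let $\nu\neq\nu'$ be two valuations such that there is a simple path $\nu=\nu_0-\nu_1-\cdots-\nu_{n+1}=\nu'$ in $\mathbf G_V$ with $n\geq0$ and $\nu_i\notin\mathrm{sat}(\varphi)$ for all $1\leq i\leq n$. Then: (Chainkilling) if $(-1)^{|\nu|}\neq(-1)^{|\nu'|}$ (i.e., $n$ is even) and $\{\nu,\nu'\}\subseteq\mathrm{sat}(\varphi)$, then, defining $\varphi'$ by $\mathrm{sat}(\varphi')=\mathrm{sat}(\varphi)\setminus\{\nu,\nu'\}$, we have $\varphi\simeq\varphi'$ (more precisely $\varphi$ can be transformed into $\varphi'$ by a finite sequence of $\xrightarrow{\pm}$ steps); (Chainswapping) if $(-1)^{|\nu|}=(-1)^{|\nu'|}$ (i.e., $n$ is odd), $\nu\in\mathrm{sat}(\varphi)$ and $\nu'\notin\mathrm{sat}(\varphi)$, then, defining $\varphi'$ by $\mathrm{sat}(\varphi')=(\mathrm{sat}(\varphi)\setminus\{\nu\})\cup\{\nu'\}$, $\varphi$ can be transformed into $\varphi'$ by a finite sequence of $\xrightarrow{\pm}$ steps.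
   Context: A valuation is a subset $\nu\subseteq V$; $\nu^{(l)}$ is $\nu$ with membership of $l$ flipped. A Boolean function on $V$ is a map $\varphi:2^V\to\{\text{false},\text{true}\}$; $\mathrm{sat}(\varphi)$ is its set of satisfying valuations. $\mathbf G_V$ is the undirected graph with vertex set $2^V$ and edges $\{\nu,\nu^{(l)}\}$ for $\nu\subseteq V$, $l\in V$. Write $\varphi\xrightarrow{+(\nu,l)}\varphi'$ if $\nu,\nu^{(l)}\notin\mathrm{sat}(\varphi)$ and $\mathrm{sat}(\varphi')=\mathrm{sat}(\varphi)\cup\{\nu,\nu^{(l)}\}$, and $\varphi\xrightarrow{-(\nu,l)}\varphi'$ if $\varphi'\xrightarrow{+(\nu,l)}\varphi$. Write $\varphi\xrightarrow{\pm}\varphi'$ if one of these holds for some $\nu,l$; $\simeq$ is the reflexive-transitive closure of $\xrightarrow{\pm}$. *)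

theory Defs
  imports Main
begin

text \<open>Valuations are sets of variables (naturals); a Boolean function is a predicate
  on valuations, only its values on subsets of V matter.\<close>

definition flip :: "nat set \<Rightarrow> nat \<Rightarrow> nat set" where
  "flip \<nu> l = (if l \<in> \<nu> then \<nu> - {l} else insert l \<nu>)"

definition sat :: "nat set \<Rightarrow> (nat set \<Rightarrow> bool) \<Rightarrow> nat set set" where
  "sat V \<phi> = {\<nu>. \<nu> \<subseteq> V \<and> \<phi> \<nu>}"

definition cube_edge :: "nat set \<Rightarrow> nat set \<Rightarrow> nat set \<Rightarrow> bool" where
  "cube_edge V a b \<longleftrightarrow> a \<subseteq> V \<and> (\<exists>l\<in>V. b = flip a l)"

definition plus_step :: "nat set \<Rightarrow> nat set \<Rightarrow> nat \<Rightarrow> (nat set \<Rightarrow> bool) \<Rightarrow> (nat set \<Rightarrow> bool) \<Rightarrow> bool" where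
  "plus_step V \<nu> l \<phi> \<phi>' \<longleftrightarrow> \<nu> \<subseteq> V \<and> l \<in> V \<and>
     \<nu> \<notin> sat V \<phi> \<and> flip \<nu> l \<notin> sat V \<phi> \<and>
     sat V \<phi>' = sat V \<phi> \<union> {\<nu>, flip \<nu> l}"

definition minus_step :: "nat set \<Rightarrow> nat set \<Rightarrow> nat \<Rightarrow> (nat set \<Rightarrow> bool) \<Rightarrow> (nat set \<Rightarrow> bool) \<Rightarrow> bool" where
  "minus_step V \<nu> l \<phi> \<phi>' \<longleftrightarrow> plus_step V \<nu> l \<phi>' \<phi>"

definition pm_step :: "nat set \<Rightarrow> (nat set \<Rightarrow> bool) \<Rightarrow> (nat set \<Rightarrow> bool) \<Rightarrow> bool" where
  "pm_step V \<phi> \<phi>' \<longleftrightarrow> (\<exists>\<nu> l. plus_step V \<nu> l \<phi> \<phi>' \<or> minus_step V \<nu> l \<phi> \<phi>')"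

abbreviation equiv_bf :: "nat set \<Rightarrow> (nat set \<Rightarrow> bool) \<Rightarrow> (nat set \<Rightarrow> bool) \<Rightarrow> bool" where
  "equiv_bf V \<equiv> (pm_step V)\<^sup>*\<^sup>*"

definition simple_path :: "nat set \<Rightarrow> nat set list \<Rightarrow> bool" where
  "simple_path V p \<longleftrightarrow> distinct p \<and> (\<forall>i. Suc i < length p \<longrightarrow> cube_edge V (p ! i) (p ! Suc i))"

end

theory Submission
  imports Defs
begin

lemma flip_ne: "flip a l \<noteq> a"
  unfolding flip_def by auto

lemma flip_sub: "a \<subseteq> V \<Longrightarrow> l \<in> V \<Longrightarrow> flip a l \<subseteq> V"
  unfolding flip_def by auto

lemma sat_setfun: "A \<subseteq> Pow V \<Longrightarrow> sat V (\<lambda>\<mu>. \<mu> \<in> A) = A"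
  unfolding sat_def by auto

lemma sat_sub: "sat V \<phi> \<subseteq> Pow V"
  unfolding sat_def by auto

lemma card_flip: "finite a \<Longrightarrow> (-1::int) ^ card (flip a l) = - ((-1) ^ card a)"
proof (cases "l \<in> a")
  case True
  assume f: "finite a"
  then have c: "card a = Suc (card (a - {l}))" using True
    by (metis card_Suc_Diff1)
  show ?thesis using True unfolding flip_def by (simp only: if_True c) simp
next
  case False
  assume f: "finite a"
  then show ?thesis using False unfolding flip_def by simp
qed

lemma shift:
  assumes "sat V \<psi> = T" "p0 \<in> T" "p1 \<notin> T" "p2 \<notin> T"
    and "cube_edge V p0 p1" "cube_edge V p1 p2" "p0 \<noteq> p2"
    and "sat V \<chi> = T - {p0} \<union> {p2}"
  shows "equiv_bf V \<psi> \<chi>"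
proof -
  obtain l where l: "p0 \<subseteq> V" "l \<in> V" "p1 = flip p0 l" using assms(5) unfolding cube_edge_def by auto
  obtain l' where l': "p1 \<subseteq> V" "l' \<in> V" "p2 = flip p1 l'" using assms(6) unfolding cube_edge_def by auto
  have p2V: "p2 \<subseteq> V" using l' flip_sub by auto
  define \<chi>1 where "\<chi>1 = (\<lambda>\<mu>. \<mu> \<in> T \<union> {p1, p2})"
  have s1: "sat V \<chi>1 = T \<union> {p1, p2}" unfolding \<chi>1_def
    using sat_setfun[of "T \<union> {p1, p2}" V] sat_sub[of V \<psi>] assms(1) l' p2V by auto
  have "plus_step V p1 l' \<psi> \<chi>1" unfolding plus_step_def using l' s1 assms by auto
  hence st1: "pm_step V \<psi> \<chi>1" unfolding pm_step_def by blast
  have "p1 \<noteq> p2" using l' flip_ne by metis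
  have "p1 \<noteq> p0" using l flip_ne by metis
  have "plus_step V p0 l \<chi> \<chi>1" unfolding plus_step_def using l s1 assms \<open>p1 \<noteq> p2\<close> \<open>p1 \<noteq> p0\<close>
    by auto
  hence "minus_step V p0 l \<chi>1 \<chi>" unfolding minus_step_def .
  hence st2: "pm_step V \<chi>1 \<chi>" unfolding pm_step_def by blast
  show ?thesis using st1 st2 by auto
qed

lemma dist_ne: "distinct p \<Longrightarrow> i < length p \<Longrightarrow> j < length p \<Longrightarrow> i \<noteq> j \<Longrightarrow> p ! i \<noteq> p ! j"
  by (simp add: nth_eq_iff_index_eq)

lemma path_edge: "simple_path V p \<Longrightarrow> Suc i < length p \<Longrightarrow> cube_edge V (p ! i) (p ! Suc i)"
  unfolding simple_path_def by auto

lemma path_sub: "simple_path V p \<Longrightarrow> i < length p \<Longrightarrow> 1 < length p \<Longrightarrow> p ! i \<subseteq> V"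
proof (cases i)
  case 0
  assume "simple_path V p" "1 < length p"
  then show ?thesis using path_edge[of V p 0] 0 unfolding cube_edge_def by auto
next
  case (Suc j)
  assume a: "simple_path V p" "i < length p"
  then have "cube_edge V (p ! j) (p ! i)" using path_edge[of V p j] Suc by auto
  then obtain l where "p ! j \<subseteq> V" "l \<in> V" "p ! i = flip (p ! j) l" unfolding cube_edge_def by blast
  then show ?thesis using flip_sub[of "p ! j" V l] by simp
qed

lemma path_parity:
  assumes "simple_path V p" "finite V" "i < length p"
  shows "(-1::int) ^ card (p ! i) = (-1) ^ i * (-1) ^ card (p ! 0)"
  using assms(3)
proof (induction i)
  case 0
  then show ?case by simp
next
  case (Suc i)
  have e: "cube_edge V (p ! i) (p ! Suc i)" using path_edge[OF assms(1)] Suc by auto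
  then obtain l where "p ! i \<subseteq> V" "p ! Suc i = flip (p ! i) l" unfolding cube_edge_def by auto
  then have "finite (p ! i)" using assms(2) finite_subset by auto
  then show ?case using Suc card_flip \<open>p ! Suc i = flip (p ! i) l\<close> by simp
qed

lemma move:
  assumes "simple_path V p" "p ! 0 \<in> sat V \<phi>"
  shows "2 * j < length p \<Longrightarrow> (\<forall>i. 1 \<le> i \<and> i \<le> 2 * j \<longrightarrow> p ! i \<notin> sat V \<phi>) \<Longrightarrow>
     \<exists>\<psi>. equiv_bf V \<phi> \<psi> \<and> sat V \<psi> = sat V \<phi> - {p ! 0} \<union> {p ! (2 * j)}"
proof (induction j)
  case 0
  then show ?case using assms(2) by (intro exI[of _ \<phi>]) auto
next
  case (Suc j)
  then obtain \<psi> where \<psi>: "equiv_bf V \<phi> \<psi>" "sat V \<psi> = sat V \<phi> - {p ! 0} \<union> {p ! (2 * j)}"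
    by auto
  have d: "distinct p" using assms(1) unfolding simple_path_def by auto
  define T where "T = sat V \<phi> - {p ! 0} \<union> {p ! (2 * j)}"
  define \<chi> where "\<chi> = (\<lambda>\<mu>. \<mu> \<in> T - {p ! (2*j)} \<union> {p ! (2 * j + 2)})"
  have nz1: "p ! (2*j+1) \<noteq> p ! (0)" by (rule dist_ne[OF d]) (use Suc.prems(1) in auto)
  have nz2: "p ! (2*j+2) \<noteq> p ! (0)" by (rule dist_ne[OF d]) (use Suc.prems(1) in auto)
  have nz3: "p ! (2*j+1) \<noteq> p ! (2*j)" by (rule dist_ne[OF d]) (use Suc.prems(1) in auto)
  have nz4: "p ! (2*j+2) \<noteq> p ! (2*j)" by (rule dist_ne[OF d]) (use Suc.prems(1) in auto)
  note nz = nz1 nz2 nz3 nz4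
  have n1: "p ! (2*j+1) \<notin> sat V \<phi>" "p ! (2*j+2) \<notin> sat V \<phi>" using Suc.prems(2) by auto
  have sub: "p ! (2*j+2) \<subseteq> V" using path_sub[OF assms(1)] Suc.prems(1) by auto
  have sT: "T \<subseteq> Pow V" unfolding T_def using sat_sub[of V \<phi>] path_sub[OF assms(1), of "2*j"] Suc.prems(1)
    by auto
  have "sat V \<chi> = T - {p ! (2*j)} \<union> {p ! (2 * j + 2)}"
  proof -
    have "T - {p ! (2*j)} \<union> {p ! (2 * j + 2)} \<subseteq> Pow V" using sT sub by blast
    then show ?thesis unfolding \<chi>_def by (rule sat_setfun)
  qed
  have eq1: "equiv_bf V \<psi> \<chi>"
    apply (rule shift[of V \<psi> T "p ! (2*j)" "p ! (2*j+1)" "p ! (2*j+2)"])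
    using \<psi>(2) T_def apply simp
    using T_def apply simp
    using T_def nz n1 apply simp
    using T_def nz n1 apply simp
    using path_edge[OF assms(1), of "2*j"] Suc.prems(1) apply simp
    using path_edge[OF assms(1), of "2*j+1"] Suc.prems(1) apply simp
    using nz apply simp
    using \<open>sat V \<chi> = _\<close> by simp
  have q: "p ! (2*j) \<notin> sat V \<phi> - {p ! 0}"
  proof (cases j)
    case 0 then show ?thesis by simp
  next
    case (Suc j') then show ?thesis using Suc.prems(2) by simp
  qed
  have e2: "2 * Suc j = 2 * j + 2" by simp
  have "sat V \<chi> = sat V \<phi> - {p ! 0} \<union> {p ! (2 * Suc j)}"
    unfolding \<open>sat V \<chi> = _\<close> T_def e2 using q nz by blast
  then show ?case using \<psi>(1) eq1 by (meson rtranclp_trans)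
qed

theorem lemma5p10:
  fixes k n :: nat and \<phi> :: "nat set \<Rightarrow> bool" and \<nu> \<nu>' :: "nat set" and p :: "nat set list"
  assumes "k \<ge> 1"
    and "\<nu> \<noteq> \<nu>'"
    and "simple_path {0..k} p" and "length p = n + 2"
    and "p ! 0 = \<nu>" and "p ! (n + 1) = \<nu>'"
    and "\<forall>i. 1 \<le> i \<and> i \<le> n \<longrightarrow> p ! i \<notin> sat {0..k} \<phi>"
  shows "((-1::int) ^ card \<nu> \<noteq> (-1) ^ card \<nu>' \<and> {\<nu>, \<nu>'} \<subseteq> sat {0..k} \<phi> \<longrightarrow>
            equiv_bf {0..k} \<phi> (\<lambda>\<mu>. \<mu> \<in> sat {0..k} \<phi> - {\<nu>, \<nu>'}))
       \<and> ((-1::int) ^ card \<nu> = (-1) ^ card \<nu>' \<and> \<nu> \<in> sat {0..k} \<phi> \<and> \<nu>' \<notin> sat {0..k} \<phi> \<longrightarrow>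
            equiv_bf {0..k} \<phi> (\<lambda>\<mu>. \<mu> \<in> (sat {0..k} \<phi> - {\<nu>}) \<union> {\<nu>'}))"
proof -
  let ?V = "{0..k::nat}"
  have par: "(-1::int) ^ card \<nu>' = (-1) ^ (n+1) * (-1) ^ card \<nu>"
    using path_parity[OF assms(3), of "n+1"] assms by simp
  have d: "distinct p" using assms(3) unfolding simple_path_def by auto
  have subs: "\<And>i. i < n + 2 \<Longrightarrow> p ! i \<subseteq> ?V" using path_sub[OF assms(3)] assms(4) by auto
  have part1: "equiv_bf ?V \<phi> (\<lambda>\<mu>. \<mu> \<in> sat ?V \<phi> - {\<nu>, \<nu>'})"
    if h: "(-1::int) ^ card \<nu> \<noteq> (-1) ^ card \<nu>'" "{\<nu>, \<nu>'} \<subseteq> sat ?V \<phi>"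
  proof -
    have "even n"
    proof (rule ccontr)
      assume "odd n" then have "even (n+1)" by simp
      then show False using h(1) par by simp
    qed
    then obtain m where m: "n = 2 * m" by auto
    obtain \<psi> where \<psi>: "equiv_bf ?V \<phi> \<psi>" "sat ?V \<psi> = sat ?V \<phi> - {p ! 0} \<union> {p ! (2 * m)}"
    proof -
      have a1: "2*m < length p" using m assms(4) by simp
      have a2: "\<forall>i. 1\<le>i \<and> i\<le>2*m \<longrightarrow> p ! i \<notin> sat ?V \<phi>" using assms(7) m by simp
      have a3: "p ! 0 \<in> sat ?V \<phi>" using h(2) assms(5) by simp
      show ?thesis using move[OF assms(3) a3 a1 a2] that by blast
    qed
    define \<chi> where "\<chi> = (\<lambda>\<mu>. \<mu> \<in> sat ?V \<phi> - {\<nu>, \<nu>'})"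
    have s\<chi>: "sat ?V \<chi> = sat ?V \<phi> - {\<nu>, \<nu>'}" unfolding \<chi>_def
      using sat_setfun[of "sat ?V \<phi> - {\<nu>, \<nu>'}" ?V] sat_sub[of ?V \<phi>] by auto
    obtain l where l: "p ! n \<subseteq> ?V" "l \<in> ?V" "p ! (n+1) = flip (p ! n) l"
      using path_edge[OF assms(3), of n] assms(4) unfolding cube_edge_def by auto
    have ne: "p ! n \<noteq> \<nu>'" using d assms by (auto simp: nth_eq_iff_index_eq)
    have pn: "p ! n \<notin> sat ?V \<phi> - {\<nu>, \<nu>'}"
    proof (cases "n = 0")
      case True then show ?thesis using assms(5) by auto
    next
      case False then show ?thesis using assms(7) by auto
    qed
    have fe: "flip (p ! n) l = \<nu>'" using l(3) assms(6) by simp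
    have fl: "flip (p ! n) l \<notin> sat ?V \<chi>" using l(3) assms(6) s\<chi> by simp
    have pn': "p ! n \<notin> sat ?V \<chi>" using pn s\<chi> by simp
    have "sat ?V \<psi> = sat ?V \<phi> - {\<nu>} \<union> {p ! n}" using \<psi>(2) m assms(5) by simp
    also have "\<dots> = sat ?V \<chi> \<union> {p ! n, flip (p ! n) l}"
      unfolding fe s\<chi> using h(2) assms(2) by blast
    finally have "sat ?V \<psi> = sat ?V \<chi> \<union> {p ! n, flip (p ! n) l}" .
    then have "plus_step ?V (p ! n) l \<chi> \<psi>" unfolding plus_step_def
      using l(1,2) fl pn' by blast
    hence "pm_step ?V \<psi> \<chi>" unfolding pm_step_def minus_step_def by blast
    then show ?thesis using \<psi>(1) \<chi>_def by auto
  qed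
  have part2: "equiv_bf ?V \<phi> (\<lambda>\<mu>. \<mu> \<in> (sat ?V \<phi> - {\<nu>}) \<union> {\<nu>'})"
    if h: "(-1::int) ^ card \<nu> = (-1) ^ card \<nu>'" "\<nu> \<in> sat ?V \<phi>" "\<nu>' \<notin> sat ?V \<phi>"
  proof -
    have "even (n+1)"
    proof (rule ccontr)
      assume "odd (n+1)"
      then show False using h(1) par by simp
    qed
    then obtain m where m: "n + 1 = 2 * m" by (metis dvdE)
    then obtain j where j: "m = Suc j" by (cases m) auto
    have nots: "\<forall>i. 1 \<le> i \<and> i \<le> 2 * j \<longrightarrow> p ! i \<notin> sat ?V \<phi>" using assms(7) m j by auto
    obtain \<psi> where \<psi>: "equiv_bf ?V \<phi> \<psi>" "sat ?V \<psi> = sat ?V \<phi> - {p ! 0} \<union> {p ! (2 * j)}"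
      using move[OF assms(3), of \<phi> j] h(2) assms nots m j by auto
    define T where "T = sat ?V \<phi> - {p ! 0} \<union> {p ! (2 * j)}"
    have nz1: "p ! (2*j+1) \<noteq> p ! (0)" by (rule dist_ne[OF d]) (use m j assms(4) in auto)
    have nz2: "p ! (2*j+2) \<noteq> p ! (0)" by (rule dist_ne[OF d]) (use m j assms(4) in auto)
    have nz3: "p ! (2*j+1) \<noteq> p ! (2*j)" by (rule dist_ne[OF d]) (use m j assms(4) in auto)
    have nz4: "p ! (2*j+2) \<noteq> p ! (2*j)" by (rule dist_ne[OF d]) (use m j assms(4) in auto)
    note nz = nz1 nz2 nz3 nz4
    have n1: "p ! (2*j+1) \<notin> sat ?V \<phi>" "p ! (2*j+2) \<notin> sat ?V \<phi>"
      using assms(7) m j h(3) assms(6) by auto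
    have sub: "p ! (2*j+2) \<subseteq> ?V" using subs m j by auto
    have e: "p ! (2*j+2) = \<nu>'" using assms(6) m j by simp
    have s0: "sat ?V (\<lambda>\<mu>. \<mu> \<in> (sat ?V \<phi> - {\<nu>}) \<union> {\<nu>'}) = (sat ?V \<phi> - {\<nu>}) \<union> {\<nu>'}"
      using sat_setfun[of "(sat ?V \<phi> - {\<nu>}) \<union> {\<nu>'}" ?V] sat_sub[of ?V \<phi>] sub e by auto
    have q: "p ! (2*j) \<notin> sat ?V \<phi> - {\<nu>}"
    proof (cases j)
      case 0 then show ?thesis using assms(5) by simp
    next
      case (Suc j') then show ?thesis using nots by simp
    qed
    have "(sat ?V \<phi> - {\<nu>}) \<union> {\<nu>'} = T - {p ! (2*j)} \<union> {\<nu>'}" unfolding T_def assms(5)[symmetric]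
      using q assms(5) by blast
    also have "\<dots> = T - {p ! (2*j)} \<union> {p ! (2*j+2)}" using e by simp
    finally have sc: "sat ?V (\<lambda>\<mu>. \<mu> \<in> (sat ?V \<phi> - {\<nu>}) \<union> {\<nu>'}) = T - {p ! (2*j)} \<union> {p ! (2*j+2)}" using s0 by simp
    have "equiv_bf ?V \<psi> (\<lambda>\<mu>. \<mu> \<in> (sat ?V \<phi> - {\<nu>}) \<union> {\<nu>'})"
      apply (rule shift[of ?V \<psi> T "p ! (2*j)" "p ! (2*j+1)" "p ! (2*j+2)"])
      using \<psi>(2) T_def apply simp
      using T_def apply simp
      using T_def nz n1 apply simp
      using T_def nz n1 apply simp
      using path_edge[OF assms(3), of "2*j"] m j assms(4) apply simp
      using path_edge[OF assms(3), of "2*j+1"] m j assms(4) apply simp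
      using nz apply simp
      using sc by simp
    then show ?thesis using \<psi>(1) by (meson rtranclp_trans)
  qed
  show ?thesis using part1 part2 by blast
qed

end
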